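(* For a positive integer $n$, the power graph $\Gamma_{\mathbb{Z}_n}$ of the cyclic group of order $n$ has orientable genus $2$ if and only if $n=8$. Moreover, $\gamma(\Gamma_{\mathbb{Z}_n})\ge 3$ for all $n\ge 9$.
   Context: The power graph $\Gamma_G$ of a finite group $G$ has vertex set $G$, two distinct elements adjacent if one is a power of the other. $\gamma$ denotes orientable genus (least number of handles on a sphere permitting a crossing-free embedding). *)

theory Defs
  imports Main
begin

text \<open>Simple graphs: a finite vertex set V and a symmetric irreflexive adjacency E.\<close>

definition darts :: "'a set \<Rightarrow> ('a \<Rightarrow> 'a \<Rightarrow> bool) \<Rightarrow> ('a \<times> 'a) set" where
  "darts V E = {(u, v). u \<in> V \<and> v \<in> V \<and> E u v}"

definition nbrs :: "'a set \<Rightarrow> ('a \<Rightarrow> 'a \<Rightarrow> bool) \<Rightarrow> 'a \<Rightarrow> 'a set" where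
  "nbrs V E v = {u \<in> V. E v u}"

definition rotation_system :: "'a set \<Rightarrow> ('a \<Rightarrow> 'a \<Rightarrow> bool) \<Rightarrow> ('a \<Rightarrow> 'a \<Rightarrow> 'a) \<Rightarrow> bool" where
  "rotation_system V E rho \<longleftrightarrow>
     (\<forall>v\<in>V. bij_betw (rho v) (nbrs V E v) (nbrs V E v) \<and>
       (\<forall>u\<in>nbrs V E v. \<forall>w\<in>nbrs V E v. \<exists>k. (rho v ^^ k) u = w))"

definition face_perm :: "('a \<Rightarrow> 'a \<Rightarrow> 'a) \<Rightarrow> 'a \<times> 'a \<Rightarrow> 'a \<times> 'a" where
  "face_perm rho = (\<lambda>(u, v). (v, rho v u))"

definition num_faces :: "'a set \<Rightarrow> ('a \<Rightarrow> 'a \<Rightarrow> bool) \<Rightarrow> ('a \<Rightarrow> 'a \<Rightarrow> 'a) \<Rightarrow> nat" where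
  "num_faces V E rho =
     (if darts V E = {} then 1
      else card ((\<lambda>d. {(face_perm rho ^^ k) d | k. True}) ` darts V E))"

text \<open>Orientable genus of a finite connected graph, via the Heffter--Edmonds--Ringel rotation
  principle: the least g such that some rotation system has Euler characteristic 2 - 2g.\<close>
definition graph_genus :: "'a set \<Rightarrow> ('a \<Rightarrow> 'a \<Rightarrow> bool) \<Rightarrow> nat" where
  "graph_genus V E = (LEAST g::nat. \<exists>rho. rotation_system V E rho \<and>
      int (card V) - int (card (darts V E) div 2) + int (num_faces V E rho) = 2 - 2 * int g)"

text \<open>Power graph of the cyclic group Z_n = {0,...,n-1} (additive): x ~ y iff x \<noteq> y and one is
  a multiple (i.e. a power in additive notation) of the other.\<close>
definition cyc_power_adj :: "nat \<Rightarrow> nat \<Rightarrow> nat \<Rightarrow> bool" where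
  "cyc_power_adj n x y \<longleftrightarrow> x \<noteq> y \<and> ((\<exists>k::nat. y = (k * x) mod n) \<or> (\<exists>k::nat. x = (k * y) mod n))"

end

theory Submission
  imports Defs "HOL-Combinatorics.Cycles" "HOL-Combinatorics.Orbits" "HOL-Library.Code_Target_Nat"
begin

lemma perm_of_permutes: "p permutes S \<Longrightarrow> finite S \<Longrightarrow> permutation p"
  using permutation_permutes by blast

lemma orbit_perm_iff: "permutation p \<Longrightarrow> y \<in> orbit p x \<longleftrightarrow> (\<exists>n. (p^^n) x = y)"
  using orbit_altdef_permutation by fastforce

lemma orbit_eq_of_mem: "permutation p \<Longrightarrow> z \<in> orbit p a \<Longrightarrow> orbit p z = orbit p a"
  using cyclic_on_orbit' orbit_cyclic_eq3 by fastforce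

lemma cut_orbit:
  assumes p: "permutation p" and s: "p s \<noteq> s" and x: "x \<noteq> s"
  shows "orbit (transpose s (p s) \<circ> p) x = orbit p x - {s}"
proof -
  define q where "q = transpose s (p s) \<circ> p"
  have pq: "permutation q" unfolding q_def
    by (simp add: p permutation_compose permutation_swap_id)
  have injp: "inj p" using p permutation_bijective bij_is_inj by blast
  have injq: "inj q" using pq permutation_bijective bij_is_inj by blast
  have qs: "q s = s" by (simp add: q_def)
  have qz: "q z = p z" if "p z \<noteq> s" "z \<noteq> s" for z
  proof -
    have "p z \<noteq> p s" using that injp by (meson injD)
    then show ?thesis using that by (simp add: q_def transpose_def)
  qed
  have qr: "q z = p s" if "p z = s" for z using that by (simp add: q_def)
  have A: "(q^^n) x \<noteq> s \<and> (\<exists>m. (p^^m) x = (q^^n) x)" for n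
  proof (induction n)
    case 0 then show ?case using x by (metis funpow_0)
  next
    case (Suc n)
    define y where "y = (q^^n) x"
    from Suc y_def obtain m where m: "(p^^m) x = y" and ys: "y \<noteq> s" by metis
    have "q y \<noteq> s" using ys qs injq by (metis injD)
    moreover have "\<exists>m. (p^^m) x = q y"
    proof (cases "p y = s")
      case True
      then have "(p^^(Suc (Suc m))) x = q y" using m qr by simp
      then show ?thesis by blast
    next
      case False
      then have "(p^^(Suc m)) x = q y" using m qz ys by simp
      then show ?thesis by blast
    qed
    ultimately show ?case by (simp add: y_def)
  qed
  define h where "h z = (if z = s then p s else z)" for z
  have B: "\<exists>n. (q^^n) x = h ((p^^m) x)" for m
  proof (induction m)
    case 0 then show ?case using x by (metis funpow_0 h_def)
  next
    case (Suc m)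
    define z where "z = (p^^m) x"
    from Suc obtain n where n: "(q^^n) x = h z" unfolding z_def by blast
    show ?case
    proof (cases "z = s")
      case True
      have "h (p z) = p s" using True s by (simp add: h_def)
      then show ?thesis using n True by (auto simp: z_def h_def)
    next
      case False
      show ?thesis
      proof (cases "p z = s")
        case True
        then have "h (p z) = q z" using qr by (simp add: h_def)
        then have "(q^^(Suc n)) x = h ((p^^Suc m) x)" using n False by (simp add: z_def h_def)
        then show ?thesis by blast
      next
        case F2: False
        then have "h (p z) = q z" using qz False by (simp add: h_def)
        then have "(q^^(Suc n)) x = h ((p^^Suc m) x)" using n False by (simp add: z_def h_def)
        then show ?thesis by blast
      qed
    qed
  qed
  show ?thesis
  proof (intro set_eqI iffI)
    fix y assume "y \<in> orbit (transpose s (p s) \<circ> p) x"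
    then obtain n where "(q^^n) x = y" using orbit_perm_iff[OF pq] q_def by blast
    then show "y \<in> orbit p x - {s}" using A[of n] orbit_perm_iff[OF p] by blast
  next
    fix y assume "y \<in> orbit p x - {s}"
    then obtain m where m: "(p^^m) x = y" "y \<noteq> s" using orbit_perm_iff[OF p] by blast
    then have "h y = y" by (simp add: h_def)
    then obtain n where "(q^^n) x = y" using B[of m] m by metis
    then show "y \<in> orbit (transpose s (p s) \<circ> p) x" using orbit_perm_iff[OF pq] q_def by blast
  qed
qed

lemma card_orbits_le: "card (orbit p ` S) \<le> card S" if "finite S"
  using card_image_le that by blast

lemma evenperm_orbits:
  assumes "p permutes S" "finite S"
  shows "evenperm p \<longleftrightarrow> even (card S - card (orbit p ` S))"
  using assms
proof (induction "card {x\<in>S. p x \<noteq> x}" arbitrary: p rule: less_induct)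
  case less
  have pp: "permutation p" using less.prems perm_of_permutes by blast
  show ?case
  proof (cases "\<exists>s\<in>S. p s \<noteq> s")
    case False
    then have "\<And>x. p x = x" using less.prems(1) unfolding permutes_def by blast
    then have "p = id" by auto
    moreover have "orbit id ` S = (\<lambda>x. {x}) ` S"
    proof -
      have h: "orbit id x = {x}" for x using orbit_eq_singleton_iff[of id x] by simp
      show ?thesis by (simp add: h)
    qed
    moreover have "card ((\<lambda>x. {x}) ` S) = card S" by (simp add: card_image)
    ultimately show ?thesis by simp
  next
    case True
    then obtain s where s: "s \<in> S" "p s \<noteq> s" by blast
    define q where "q = transpose s (p s) \<circ> p"
    have psS: "p s \<in> S" by (simp add: permutes_in_image[OF less.prems(1)] s(1))
    have qS: "q permutes S" unfolding q_def
      by (rule permutes_compose[OF less.prems(1) permutes_swap_id[OF s(1) psS]])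
    have pq: "permutation q" using qS less.prems(2) perm_of_permutes by blast
    have qs: "q s = s" by (simp add: q_def)
    have sub: "{x\<in>S. q x \<noteq> x} \<subset> {x\<in>S. p x \<noteq> x}"
    proof -
      have "q x = x" if "p x = x" for x
      proof -
        have "x \<noteq> s" using that s by auto
        have "p x \<noteq> p s" using \<open>x \<noteq> s\<close> pp permutation_bijective bij_is_inj by (metis injD)
        then show ?thesis using that \<open>x \<noteq> s\<close> by (simp add: q_def transpose_def)
      qed
      then have "{x\<in>S. q x \<noteq> x} \<subseteq> {x\<in>S. p x \<noteq> x}" by blast
      moreover have "s \<in> {x\<in>S. p x \<noteq> x}" "s \<notin> {x\<in>S. q x \<noteq> x}" using s qs by auto
      ultimately show ?thesis by blast
    qed
    have IH: "evenperm q \<longleftrightarrow> even (card S - card (orbit q ` S))"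
      using less.hyps[OF psubset_card_mono[OF _ sub] qS less.prems(2)] less.prems(2) by simp
    have ev0: "\<not> evenperm (transpose s (p s))" using evenperm_swap s(2) by metis
    have ev: "evenperm q \<longleftrightarrow> \<not> evenperm p"
      unfolding q_def using evenperm_comp[OF permutation_swap_id pp] ev0 by blast
    have orbq: "orbit q x = orbit p x - {s}" if "x \<noteq> s" for x
      unfolding q_def using cut_orbit[OF pp s(2) that] .
    have qss: "orbit q s = {s}" using qs orbit_eq_singleton_iff by metis
    have selfq: "x \<in> orbit q x" for x using pq permutation_self_in_orbit by metis
    have selfp: "x \<in> orbit p x" for x using pp permutation_self_in_orbit by metis
    have e1: "orbit q ` S = insert {s} (orbit q ` (S - {s}))" using s(1) qss by (metis insert_Diff image_insert)
    have e2: "{s} \<notin> orbit q ` (S - {s})"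
    proof
      assume "{s} \<in> orbit q ` (S - {s})"
      then obtain x where "x \<in> S - {s}" "{s} = orbit q x" by blast
      then show False using selfq[of x] by auto
    qed
    have e3: "orbit q ` (S - {s}) = (\<lambda>X. X - {s}) ` (orbit p ` S)"
    proof (intro set_eqI iffI)
      fix X assume "X \<in> orbit q ` (S - {s})"
      then obtain x where "x \<in> S" "x \<noteq> s" "X = orbit q x" by auto
      then show "X \<in> (\<lambda>X. X - {s}) ` (orbit p ` S)" using orbq by auto
    next
      fix X assume "X \<in> (\<lambda>X. X - {s}) ` (orbit p ` S)"
      then obtain y where y: "y \<in> S" "X = orbit p y - {s}" by auto
      show "X \<in> orbit q ` (S - {s})"
      proof (cases "y = s")
        case True
        have "orbit p y = orbit p (p s)" using True permutation_orbit_step[OF pp] by metis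
        then have "X = orbit q (p s)" using y orbq s(2) by auto
        then show ?thesis using psS s(2) by auto
      next
        case False
        then show ?thesis using y orbq by auto
      qed
    qed
    have e4: "inj_on (\<lambda>X. X - {s}) (orbit p ` S)"
    proof (rule inj_onI)
      fix O1 O2 assume OO: "O1 \<in> orbit p ` S" "O2 \<in> orbit p ` S" "O1 - {s} = O2 - {s}"
      then obtain a b where ab: "O1 = orbit p a" "O2 = orbit p b" by auto
      have "\<exists>z. z \<in> O1 \<and> z \<noteq> s"
      proof (cases "a = s")
        case True
        then have "p s \<in> O1" using ab orbit.base by metis
        then show ?thesis using s(2) by blast
      next
        case False then show ?thesis using ab selfp by blast
      qed
      then obtain z where z: "z \<in> O1" "z \<noteq> s" by blast
      then have "z \<in> O2" using OO(3) by blast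
      then show "O1 = O2" using z ab orbit_eq_of_mem[OF pp] by metis
    qed
    have fin: "finite (orbit q ` (S - {s}))" using less.prems(2) by simp
    have "card (orbit q ` S) = Suc (card (orbit q ` (S - {s})))"
      unfolding e1 using e2 fin by simp
    also have "card (orbit q ` (S - {s})) = card (orbit p ` S)"
      unfolding e3 using e4 by (rule card_image)
    finally have cq: "card (orbit q ` S) = Suc (card (orbit p ` S))" .
    have "card (orbit q ` S) \<le> card S" using card_orbits_le less.prems(2) by blast
    then have "card S - card (orbit p ` S) = Suc (card S - card (orbit q ` S))" using cq by simp
    then have "even (card S - card (orbit p ` S)) \<longleftrightarrow> odd (card S - card (orbit q ` S))"
      by (simp only: even_Suc)
    then show ?thesis using IH ev by argo
  qed
qed


lemma card_orbit_sum:
  assumes "p permutes S" "finite S"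
  shows "card S = sum card (orbit p ` S)"
proof -
  have pp: "permutation p" using assms perm_of_permutes by blast
  have U: "\<Union>(orbit p ` S) = S"
  proof
    show "\<Union>(orbit p ` S) \<subseteq> S" using permutes_orbit_subset[OF assms(1)] by blast
    show "S \<subseteq> \<Union>(orbit p ` S)" using permutation_self_in_orbit[OF pp] by blast
  qed
  have "pairwise disjnt (orbit p ` S)"
  proof (rule pairwiseI)
    fix X Y assume XY: "X \<in> orbit p ` S" "Y \<in> orbit p ` S" "X \<noteq> Y"
    show "disjnt X Y"
    proof (rule ccontr)
      assume "\<not> disjnt X Y"
      then obtain z where "z \<in> X" "z \<in> Y" unfolding disjnt_def by blast
      then show False using XY orbit_eq_of_mem[OF pp] by (metis imageE)
    qed
  qed
  moreover have "\<And>X. X \<in> orbit p ` S \<Longrightarrow> finite X"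
    using permutes_orbit_subset[OF assms(1)] assms(2) finite_subset by blast
  ultimately have "card (\<Union>(orbit p ` S)) = sum card (orbit p ` S)" by (rule card_Union_disjoint)
  then show ?thesis using U by simp
qed

lemma card_orbit_lower:
  assumes "p permutes S" "finite S" "\<And>x. x \<in> S \<Longrightarrow> k \<le> card (orbit p x)"
  shows "k * card (orbit p ` S) \<le> card S"
proof -
  have "k * card (orbit p ` S) = (\<Sum>X\<in>orbit p ` S. k)" by simp
  also have "\<dots> \<le> sum card (orbit p ` S)" using assms(3) by (intro sum_mono) auto
  finally show ?thesis using card_orbit_sum[OF assms(1,2)] by simp
qed

lemma card_orbit_exact:
  assumes "p permutes S" "finite S" "\<And>x. x \<in> S \<Longrightarrow> card (orbit p x) = k"
  shows "card S = k * card (orbit p ` S)"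
proof -
  have "card S = sum card (orbit p ` S)" using card_orbit_sum[OF assms(1,2)] .
  also have "\<dots> = (\<Sum>X\<in>orbit p ` S. k)" using assms(3) by (intro sum.cong) auto
  finally show ?thesis by simp
qed

definition th :: "('a \<times> 'a) set \<Rightarrow> 'a \<times> 'a \<Rightarrow> 'a \<times> 'a" where
  "th D d = (if d \<in> D then prod.swap d else d)"

definition Rm :: "('a \<times> 'a) set \<Rightarrow> ('a \<Rightarrow> 'a \<Rightarrow> 'a) \<Rightarrow> 'a \<times> 'a \<Rightarrow> 'a \<times> 'a" where
  "Rm D rho d = (if d \<in> D then (fst d, rho (fst d) (snd d)) else d)"

locale rmap =
  fixes V :: "'a set" and E :: "'a \<Rightarrow> 'a \<Rightarrow> bool" and rho :: "'a \<Rightarrow> 'a \<Rightarrow> 'a"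
  assumes finV: "finite V" and symE: "\<And>u v. E u v \<Longrightarrow> E v u" and irrE: "\<And>v. \<not> E v v"
    and rs: "rotation_system V E rho"
begin

abbreviation "D \<equiv> darts V E"
abbreviation "N \<equiv> nbrs V E"
abbreviation "T \<equiv> th D"
abbreviation "R \<equiv> Rm D rho"
definition "Fp = R \<circ> T"

lemma D_iff: "(v, w) \<in> D \<longleftrightarrow> v \<in> V \<and> w \<in> N v"
  by (auto simp: darts_def nbrs_def)

lemma finD: "finite D"
proof -
  have "D \<subseteq> V \<times> V" by (auto simp: darts_def)
  then show ?thesis using finV finite_subset by blast
qed

lemma D_swap: "(u, v) \<in> D \<Longrightarrow> (v, u) \<in> D"
  using symE by (auto simp: darts_def)

lemma N_sub: "N v \<subseteq> V" by (auto simp: nbrs_def)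

lemma rho_bij: "v \<in> V \<Longrightarrow> bij_betw (rho v) (N v) (N v)"
  using rs by (simp add: rotation_system_def)

lemma rho_in: "v \<in> V \<Longrightarrow> w \<in> N v \<Longrightarrow> rho v w \<in> N v"
  using rho_bij bij_betw_apply by metis

lemma rho_cyc: "v \<in> V \<Longrightarrow> u \<in> N v \<Longrightarrow> w \<in> N v \<Longrightarrow> \<exists>k. (rho v ^^ k) u = w"
  using rs by (simp add: rotation_system_def)

lemma T_permutes: "T permutes D"
proof (rule bij_imp_permutes)
  show "bij_betw T D D"
    by (rule bij_betw_byWitness[where f'=T]) (auto simp: th_def D_swap)
  show "\<And>x. x \<notin> D \<Longrightarrow> T x = x" by (simp add: th_def)
qed

lemma R_permutes: "R permutes D"
proof (rule bij_imp_permutes)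
  have img: "R ` D \<subseteq> D"
  proof
    fix d assume "d \<in> R ` D"
    then obtain v w where "(v,w) \<in> D" "d = R (v,w)" by auto
    then show "d \<in> D" using rho_in by (auto simp: Rm_def D_iff)
  qed
  have inj: "inj_on R D"
  proof (rule inj_onI)
    fix x y assume xy: "x \<in> D" "y \<in> D" "R x = R y"
    obtain v w v' w' where x: "x = (v,w)" and y: "y = (v',w')" by fastforce
    have vv: "v = v'" using xy x y by (simp add: Rm_def)
    have "rho v w = rho v w'" using xy x y vv by (simp add: Rm_def)
    moreover have "w \<in> N v" "w' \<in> N v" "v \<in> V" using xy x y vv D_iff by auto
    ultimately have "w = w'" using rho_bij bij_betw_imp_inj_on inj_onD by metis
    then show "x = y" using x y vv by simp
  qed
  show "bij_betw R D D" unfolding bij_betw_def using endo_inj_surj[OF finD img inj] inj by simp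
  show "\<And>x. x \<notin> D \<Longrightarrow> R x = x" by (simp add: Rm_def)
qed

lemma Fp_permutes: "Fp permutes D"
  unfolding Fp_def by (rule permutes_compose[OF T_permutes R_permutes])

lemma perms: "permutation T" "permutation R" "permutation Fp"
  using T_permutes R_permutes Fp_permutes finD perm_of_permutes by blast+

lemma Fp_face: "d \<in> D \<Longrightarrow> Fp d = face_perm rho d"
proof -
  assume d: "d \<in> D"
  obtain u v where uv: "d = (u, v)" by fastforce
  have "(v, u) \<in> D" using d uv D_swap by simp
  then show ?thesis using uv d by (simp add: Fp_def th_def Rm_def face_perm_def)
qed

lemma Fp_in: "d \<in> D \<Longrightarrow> Fp d \<in> D"
  using Fp_permutes permutes_in_image by metis

lemma funpow_face: "d \<in> D \<Longrightarrow> (face_perm rho ^^ k) d = (Fp ^^ k) d \<and> (Fp ^^ k) d \<in> D"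
proof (induction k)
  case 0 then show ?case by simp
next
  case (Suc k)
  then show ?case using Fp_face Fp_in by simp
qed

lemma face_set: "d \<in> D \<Longrightarrow> {(face_perm rho ^^ k) d | k. True} = orbit Fp d"
  using funpow_face orbit_altdef_permutation[OF perms(3)] by simp

lemma num_faces_eq: "D \<noteq> {} \<Longrightarrow> num_faces V E rho = card (orbit Fp ` D)"
proof -
  assume "D \<noteq> {}"
  then have "num_faces V E rho = card ((\<lambda>d. {(face_perm rho ^^ k) d | k. True}) ` D)"
    by (simp add: num_faces_def)
  also have "(\<lambda>d. {(face_perm rho ^^ k) d | k. True}) ` D = orbit Fp ` D"
    using face_set by (auto simp: image_def)
  finally show ?thesis .
qed

lemma T_orbit: "d \<in> D \<Longrightarrow> orbit T d = {d, prod.swap d}"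
proof -
  assume d: "d \<in> D"
  have s: "prod.swap d \<in> D" using d D_swap by (cases d) auto
  have "(T ^^ 2) d = d" using d s by (simp add: th_def numeral_2_eq_2)
  then have "orbit T d = {(T ^^ m) d | m. m < 2}" by (rule orbit_altdef_bounded) simp
  also have "\<dots> = {d, T d}"
  proof (intro set_eqI iffI)
    fix x assume "x \<in> {(T ^^ m) d | m. m < 2}"
    then obtain m where "m < 2" "x = (T ^^ m) d" by blast
    then show "x \<in> {d, T d}" by (cases m) (auto simp: less_Suc_eq)
  next
    fix x assume "x \<in> {d, T d}"
    then have "x = (T ^^ 0) d \<or> x = (T ^^ 1) d" by auto
    moreover have "(0::nat) < 2" "(1::nat) < 2" by auto
    ultimately show "x \<in> {(T ^^ m) d | m. m < 2}" by blast
  qed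
  finally show ?thesis using d by (simp add: th_def)
qed

lemma card_T_orbits: "card D = 2 * card (orbit T ` D)"
proof (rule card_orbit_exact[OF T_permutes finD])
  fix d assume d: "d \<in> D"
  have "prod.swap d \<noteq> d" using d irrE by (cases d) (auto simp: darts_def)
  then show "card (orbit T d) = 2" using T_orbit[OF d] by auto
qed

lemma R_pow: "(v, w) \<in> D \<Longrightarrow> (R ^^ k) (v, w) = (v, (rho v ^^ k) w) \<and> (rho v ^^ k) w \<in> N v"
proof (induction k)
  case 0 then show ?case using D_iff by simp
next
  case (Suc k)
  then have "(v, (rho v ^^ k) w) \<in> D" using D_iff by auto
  then show ?case using Suc rho_in D_iff by (simp add: Rm_def)
qed

lemma R_orbit: "(v, w) \<in> D \<Longrightarrow> orbit R (v, w) = {v} \<times> N v"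
proof -
  assume d: "(v, w) \<in> D"
  have "orbit R (v, w) = {(R ^^ k) (v, w) | k. True}" using orbit_altdef_permutation[OF perms(2)] .
  also have "\<dots> = {v} \<times> N v"
  proof (intro set_eqI iffI)
    fix x assume "x \<in> {(R ^^ k) (v, w) | k. True}"
    then show "x \<in> {v} \<times> N v" using R_pow[OF d] by auto
  next
    fix x assume x: "x \<in> {v} \<times> N v"
    then obtain u where u: "x = (v, u)" "u \<in> N v" by auto
    have "v \<in> V" "w \<in> N v" using d D_iff by auto
    then obtain k where "(rho v ^^ k) w = u" using rho_cyc u by blast
    then have "(R ^^ k) (v, w) = x" using R_pow[OF d, of k] u by auto
    then show "x \<in> {(R ^^ k) (v, w) | k. True}" by blast
  qed
  finally show ?thesis .
qed

lemma card_R_orbits: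
  assumes ne: "\<And>v. v \<in> V \<Longrightarrow> N v \<noteq> {}"
  shows "card (orbit R ` D) = card V"
proof -
  have "orbit R ` D = (\<lambda>v. {v} \<times> N v) ` V"
  proof (intro set_eqI iffI)
    fix X assume "X \<in> orbit R ` D"
    then obtain v w where "(v, w) \<in> D" "X = orbit R (v, w)" by auto
    then show "X \<in> (\<lambda>v. {v} \<times> N v) ` V" using R_orbit D_iff by auto
  next
    fix X assume "X \<in> (\<lambda>v. {v} \<times> N v) ` V"
    then obtain v where v: "v \<in> V" "X = {v} \<times> N v" by auto
    then obtain w where "w \<in> N v" using ne by blast
    then have "(v, w) \<in> D" using v D_iff by auto
    then show "X \<in> orbit R ` D" using R_orbit v by (metis image_eqI)
  qed
  moreover have "inj_on (\<lambda>v. {v} \<times> N v) V"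
  proof (rule inj_onI)
    fix v v' assume vv: "v \<in> V" "v' \<in> V" "{v} \<times> N v = {v'} \<times> N v'"
    obtain w where "w \<in> N v" using ne vv(1) by blast
    then have "(v, w) \<in> {v'} \<times> N v'" using vv(3) by blast
    then show "v = v'" by simp
  qed
  ultimately show ?thesis by (simp add: card_image)
qed

lemma parity:
  assumes ne: "\<And>v. v \<in> V \<Longrightarrow> N v \<noteq> {}" and Dne: "D \<noteq> {}"
  shows "even (int (card V) - int (card D div 2) + int (num_faces V E rho))"
proof -
  let ?F = "card (orbit Fp ` D)" and ?t = "card (orbit T ` D)"
  have eF: "evenperm Fp \<longleftrightarrow> even (card D - ?F)" by (rule evenperm_orbits[OF Fp_permutes finD])
  have eR: "evenperm R \<longleftrightarrow> even (card D - card V)"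
    using evenperm_orbits[OF R_permutes finD] card_R_orbits[OF ne] by simp
  have eT: "evenperm T \<longleftrightarrow> even (card D - ?t)" by (rule evenperm_orbits[OF T_permutes finD])
  have comp: "evenperm Fp \<longleftrightarrow> (evenperm R \<longleftrightarrow> evenperm T)"
    unfolding Fp_def by (rule evenperm_comp[OF perms(2) perms(1)])
  have l1: "?F \<le> card D" using card_orbits_le finD by blast
  have l2: "card V \<le> card D" using card_orbits_le[OF finD, of R] card_R_orbits[OF ne] by simp
  have dt: "card D = 2 * ?t" by (rule card_T_orbits)
  have nf: "num_faces V E rho = ?F" using num_faces_eq[OF Dne] .
  have "even (int (card D) - int ?F) \<longleftrightarrow> (even (int (card D) - int (card V)) \<longleftrightarrow> even (int (card D) - int ?t))"
    using eF eR eT comp l1 l2 dt by (simp add: of_nat_diff[symmetric] even_of_nat_iff del: of_nat_diff)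
  then show ?thesis using dt nf by auto
qed

lemma orbit_ge2: "d \<in> D \<Longrightarrow> 2 \<le> card (orbit Fp d)"
proof -
  assume d: "d \<in> D"
  obtain u v where uv: "d = (u, v)" by fastforce
  have "E u v" using d uv by (simp add: darts_def)
  then have "u \<noteq> v" using irrE by auto
  then have ne: "Fp d \<noteq> d" using Fp_face[OF d] uv by (simp add: face_perm_def)
  have "d \<in> orbit Fp d" "Fp d \<in> orbit Fp d" using permutation_self_in_orbit[OF perms(3)] orbit.base by metis+
  moreover have "finite (orbit Fp d)" using permutes_orbit_subset[OF Fp_permutes d] finD finite_subset by blast
  ultimately have "card {d, Fp d} \<le> card (orbit Fp d)" by (intro card_mono) auto
  then show ?thesis using ne by simp
qed

lemma faces_le2: "D \<noteq> {} \<Longrightarrow> 2 * num_faces V E rho \<le> card D"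
  using num_faces_eq card_orbit_lower[OF Fp_permutes finD orbit_ge2] by simp

lemma orbit_ge3:
  assumes nd: "\<And>u v. (u, v) \<in> D \<Longrightarrow> N u = {v} \<Longrightarrow> N v = {u} \<Longrightarrow> False"
  shows "d \<in> D \<Longrightarrow> 3 \<le> card (orbit Fp d)"
proof -
  assume d: "d \<in> D"
  obtain u v where uv: "d = (u, v)" by fastforce
  have uvD: "(u, v) \<in> D" and vuD: "(v, u) \<in> D" using d uv D_swap by auto
  have uV: "u \<in> V" and vV: "v \<in> V" and uN: "u \<in> N v" and vN: "v \<in> N u" using uvD vuD D_iff by auto
  define w where "w = rho v u"
  have wN: "w \<in> N v" using rho_in[OF vV uN] w_def by simp
  have d1: "Fp d = (v, w)" using Fp_face[OF d] uv w_def by (simp add: face_perm_def)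
  have vwD: "(v, w) \<in> D" using vV wN D_iff by simp
  have d2: "Fp (Fp d) = (w, rho w v)" using Fp_face[OF vwD] d1 by (simp add: face_perm_def)
  have irr: "a \<noteq> b" if "(a, b) \<in> D" for a b using that irrE by (auto simp: darts_def)
  have n01: "d \<noteq> Fp d" using d1 uv irr[OF uvD] by simp
  have n12: "Fp d \<noteq> Fp (Fp d)" using d1 d2 irr[OF vwD] by simp
  have n02: "d \<noteq> Fp (Fp d)"
  proof
    assume "d = Fp (Fp d)"
    then have wu: "w = u" and rv: "rho u v = v" using uv d2 by auto
    have fix1: "(rho v ^^ k) u = u" for k using wu w_def by (induction k) auto
    have fix2: "(rho u ^^ k) v = v" for k using rv by (induction k) auto
    have "N v = {u}"
    proof -
      have "x = u" if "x \<in> N v" for x using rho_cyc[OF vV uN that] fix1 by metis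
      then show ?thesis using uN by blast
    qed
    moreover have "N u = {v}"
    proof -
      have "x = v" if "x \<in> N u" for x using rho_cyc[OF uV vN that] fix2 by metis
      then show ?thesis using vN by blast
    qed
    ultimately show False using nd[OF uvD] by blast
  qed
  have "d \<in> orbit Fp d" "Fp d \<in> orbit Fp d" "Fp (Fp d) \<in> orbit Fp d"
    using permutation_self_in_orbit[OF perms(3)] orbit.base orbit.step by metis+
  moreover have "finite (orbit Fp d)" using permutes_orbit_subset[OF Fp_permutes d] finD finite_subset by blast
  ultimately have "card {d, Fp d, Fp (Fp d)} \<le> card (orbit Fp d)" by (intro card_mono) auto
  then show ?thesis using n01 n12 n02 by simp
qed

lemma faces_le3:
  assumes nd: "\<And>u v. (u, v) \<in> D \<Longrightarrow> N u = {v} \<Longrightarrow> N v = {u} \<Longrightarrow> False"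
  shows "D \<noteq> {} \<Longrightarrow> 3 * num_faces V E rho \<le> card D"
  using num_faces_eq card_orbit_lower[OF Fp_permutes finD orbit_ge3[OF nd]] by simp

end


section \<open>Rotation systems from lists\<close>

lemma cycle_pow_nth:
  assumes "distinct cs" "i < length cs"
  shows "(cycle_of_list cs ^^ k) (cs ! i) = cs ! ((k + i) mod length cs)"
proof -
  have "map (cycle_of_list cs ^^ k) cs = rotate k cs" using cyclic_rotation[OF assms(1)] .
  then have "(cycle_of_list cs ^^ k) (cs ! i) = rotate k cs ! i"
    using assms(2) by (metis nth_map)
  then show ?thesis using nth_rotate[OF assms(2)] by simp
qed

lemma rotation_system_lists:
  assumes "\<And>v. v \<in> V \<Longrightarrow> distinct (L v) \<and> set (L v) = nbrs V E v"
  shows "rotation_system V E (\<lambda>v. cycle_of_list (L v))"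
  unfolding rotation_system_def
proof (intro ballI conjI)
  fix v assume v: "v \<in> V"
  have d: "distinct (L v)" and s: "set (L v) = nbrs V E v" using assms[OF v] by auto
  show "bij_betw (cycle_of_list (L v)) (nbrs V E v) (nbrs V E v)"
    using permutes_imp_bij[OF cycle_permutes[of "L v"]] s by simp
  fix u w assume u: "u \<in> nbrs V E v" and w: "w \<in> nbrs V E v"
  obtain i where i: "i < length (L v)" "L v ! i = u" using u s by (metis in_set_conv_nth)
  obtain j where j: "j < length (L v)" "L v ! j = w" using w s by (metis in_set_conv_nth)
  have "(cycle_of_list (L v) ^^ (j + length (L v) - i)) u = L v ! ((j + length (L v) - i + i) mod length (L v))"
    using cycle_pow_nth[OF d i(1)] i(2) by simp
  also have "(j + length (L v) - i + i) mod length (L v) = j" using i(1) j(1) by simp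
  finally show "\<exists>k. (cycle_of_list (L v) ^^ k) u = w" using j(2) by blast
qed

lemma rotation_exists:
  fixes V :: "'a::linorder set"
  assumes "finite V"
  shows "\<exists>rho. rotation_system V E rho"
proof -
  have "finite (nbrs V E v)" for v using assms by (simp add: nbrs_def)
  then show ?thesis
    using rotation_system_lists[of V "\<lambda>v. sorted_list_of_set (nbrs V E v)" E] by auto
qed

definition chi :: "'a set \<Rightarrow> ('a \<Rightarrow> 'a \<Rightarrow> bool) \<Rightarrow> ('a \<Rightarrow> 'a \<Rightarrow> 'a) \<Rightarrow> int" where
  "chi V E rho = int (card V) - int (card (darts V E) div 2) + int (num_faces V E rho)"

lemma genus_alt: "graph_genus V E = (LEAST g::nat. \<exists>rho. rotation_system V E rho \<and> chi V E rho = 2 - 2 * int g)"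
  by (simp add: graph_genus_def chi_def)

lemma genus_le:
  assumes "rotation_system V E rho" "even (chi V E rho)" "chi V E rho \<le> 2" "chi V E rho \<ge> 2 - 2 * int k"
  shows "graph_genus V E \<le> k"
proof -
  have "chi V E rho = 2 - 2 * int (nat ((2 - chi V E rho) div 2))" using assms(2,3) by auto
  then have "graph_genus V E \<le> nat ((2 - chi V E rho) div 2)"
    unfolding genus_alt using assms(1) by (intro Least_le) blast
  also have "\<dots> \<le> k" using assms(4) by auto
  finally show ?thesis .
qed

lemma genus_ge:
  assumes "rotation_system V E rho0" "even (chi V E rho0)" "chi V E rho0 \<le> 2"
    and "\<And>rho. rotation_system V E rho \<Longrightarrow> chi V E rho \<le> 2 - 2 * int k"
  shows "k \<le> graph_genus V E"
proof -
  let ?P = "\<lambda>g::nat. \<exists>rho. rotation_system V E rho \<and> chi V E rho = 2 - 2 * int g"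
  have "chi V E rho0 = 2 - 2 * int (nat ((2 - chi V E rho0) div 2))" using assms(2,3) by auto
  then have "?P (nat ((2 - chi V E rho0) div 2))" using assms(1) by blast
  then have "?P (Least ?P)" by (rule LeastI)
  then obtain rho where "rotation_system V E rho" "chi V E rho = 2 - 2 * int (Least ?P)" by blast
  then have "2 - 2 * int (Least ?P) \<le> 2 - 2 * int k" using assms(4) by metis
  then show ?thesis unfolding genus_alt by simp
qed

section \<open>Face lower bounds from explicit cycles\<close>

lemma card_set_image_concat:
  assumes "distinct (concat cs)" "\<forall>c\<in>set cs. c \<noteq> []"
  shows "card (set ` set cs) = length cs"
  using assms
proof (induction cs)
  case Nil then show ?case by simp
next
  case (Cons c cs)
  have "set c \<notin> set ` set cs"
  proof
    assume "set c \<in> set ` set cs"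
    then obtain c' where "c' \<in> set cs" "set c' = set c" by auto
    moreover obtain x where "x \<in> set c" using Cons.prems(2) by (cases c) auto
    ultimately have "x \<in> set (concat cs)" by auto
    then show False using Cons.prems(1) \<open>x \<in> set c\<close> by auto
  qed
  then show ?case using Cons by simp
qed

context rmap
begin

lemma cycle_orbit:
  assumes c: "c \<noteq> []" "distinct c" "set c \<subseteq> D" "map (face_perm rho) c = rotate1 c"
  shows "orbit Fp (hd c) = set c"
proof -
  have m1: "map Fp c = rotate1 c"
  proof -
    have "map Fp c = map (face_perm rho) c" using c(3) Fp_face by (intro map_cong) auto
    then show ?thesis using c(4) by simp
  qed
  have mk: "map (Fp ^^ k) c = rotate k c" for k
  proof (induction k)
    case 0 then show ?case by simp
  next
    case (Suc k)
    have "map (Fp ^^ Suc k) c = map Fp (map (Fp ^^ k) c)" by simp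
    also have "\<dots> = map Fp (rotate k c)" using Suc by simp
    also have "\<dots> = rotate k (map Fp c)" by (simp add: rotate_map)
    also have "\<dots> = rotate (Suc k) c" using m1 by (metis rotate1_rotate_swap rotate_Suc)
    finally show ?case .
  qed
  have pk: "(Fp ^^ k) (hd c) = c ! (k mod length c)" for k
  proof -
    have "(Fp ^^ k) (c ! 0) = rotate k c ! 0" using mk[of k] c(1) by (metis length_greater_0_conv nth_map)
    then show ?thesis using nth_rotate[of 0 c k] c(1) by (simp add: hd_conv_nth)
  qed
  have "orbit Fp (hd c) = {(Fp ^^ k) (hd c) | k. True}" using orbit_altdef_permutation[OF perms(3)] .
  also have "\<dots> = set c"
  proof (intro set_eqI iffI)
    fix x assume "x \<in> {(Fp ^^ k) (hd c) | k. True}"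
    then obtain k where "x = (Fp ^^ k) (hd c)" by blast
    then show "x \<in> set c" using pk c(1) by simp
  next
    fix x assume "x \<in> set c"
    then obtain i where i: "i < length c" "c ! i = x" by (metis in_set_conv_nth)
    then have "(Fp ^^ i) (hd c) = x" using pk by simp
    then show "x \<in> {(Fp ^^ k) (hd c) | k. True}" by blast
  qed
  finally show ?thesis .
qed

lemma faces_ge_cycles:
  assumes "D \<noteq> {}" "distinct (concat cs)"
    "\<forall>c\<in>set cs. c \<noteq> [] \<and> set c \<subseteq> D \<and> map (face_perm rho) c = rotate1 c"
  shows "length cs \<le> num_faces V E rho"
proof -
  have "set ` set cs \<subseteq> orbit Fp ` D"
  proof
    fix X assume "X \<in> set ` set cs"
    then obtain c where c: "c \<in> set cs" "X = set c" by auto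
    have dc: "distinct c" using assms(2) c(1) by (metis distinct_concat_iff)
    have "orbit Fp (hd c) = set c" using assms(3) c(1) dc cycle_orbit by blast
    moreover have "hd c \<in> D" using assms(3) c(1) by (metis hd_in_set subsetD)
    ultimately show "X \<in> orbit Fp ` D" using c(2) by (metis image_eqI)
  qed
  then have "card (set ` set cs) \<le> card (orbit Fp ` D)" using finD by (intro card_mono) auto
  then show ?thesis using card_set_image_concat[OF assms(2)] assms(3) num_faces_eq[OF assms(1)] by simp
qed

lemma faces_ge1: "D \<noteq> {} \<Longrightarrow> 1 \<le> num_faces V E rho"
  using num_faces_eq finD by (simp add: Suc_le_eq card_gt_0_iff)

end


section \<open>Power graph basics\<close>

lemma pg_rmap: "rotation_system {0..<n} (cyc_power_adj n) rho \<Longrightarrow> rmap {0..<n} (cyc_power_adj n) rho"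
  by unfold_locales (auto simp: cyc_power_adj_def)

definition adjc :: "nat \<Rightarrow> nat \<Rightarrow> nat \<Rightarrow> bool" where
  "adjc n x y \<longleftrightarrow> x \<noteq> y \<and> ((\<exists>k\<in>set [0..<n]. y = (k * x) mod n) \<or> (\<exists>k\<in>set [0..<n]. x = (k * y) mod n))"

lemma ex_mod: "0 < n \<Longrightarrow> (\<exists>k::nat. y = (k * x) mod n) \<longleftrightarrow> (\<exists>k\<in>set [0..<n]. y = (k * x) mod n)"
proof
  assume n: "0 < n" and "\<exists>k::nat. y = (k * x) mod n"
  then obtain k where k: "y = (k * x) mod n" by blast
  have "y = ((k mod n) * x) mod n" using k by (simp add: mod_mult_left_eq)
  moreover have "k mod n \<in> set [0..<n]" using n by simp
  ultimately show "\<exists>k\<in>set [0..<n]. y = (k * x) mod n" by blast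
qed blast

lemma adj_code: "0 < n \<Longrightarrow> cyc_power_adj n x y = adjc n x y"
  unfolding cyc_power_adj_def adjc_def using ex_mod by presburger

lemma darts_code: "0 < n \<Longrightarrow> darts {0..<n} (cyc_power_adj n) = Set.filter (\<lambda>(u, v). adjc n u v) (set [0..<n] \<times> set [0..<n])"
  by (auto simp: darts_def adj_code)

lemma nbrs_code: "0 < n \<Longrightarrow> nbrs {0..<n} (cyc_power_adj n) v = Set.filter (adjc n v) (set [0..<n])"
  by (auto simp: nbrs_def adj_code)

lemma adj0: "0 < y \<Longrightarrow> cyc_power_adj n 0 y"
  unfolding cyc_power_adj_def by (rule conjI) (auto intro: exI[of _ 0])

lemma univ_inv:
  assumes "(c * a) mod n = 1" "y < n" "y \<noteq> a"
  shows "cyc_power_adj n a y"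
proof -
  have "((y * c) * a) mod n = (y * ((c * a) mod n)) mod n" by (simp add: mod_mult_right_eq mult.assoc)
  also have "\<dots> = y" using assms by simp
  finally have "y = ((y * c) * a) mod n" by simp
  then show ?thesis unfolding cyc_power_adj_def using assms(3) by blast
qed

lemma neg_mod:
  assumes "0 < a" "a < (n::nat)"
  shows "((n - 1) * (n - a)) mod n = a"
proof -
  obtain b where b: "n = a + b + 1" using assms by (metis add.commute less_imp_Suc_add add_Suc_right Suc_eq_plus1)
  have "(n - 1) * (n - a) = n * b + a"
  proof -
    have "(n - 1) * (n - a) = (a + b) * (b + 1)" using b by simp
    also have "\<dots> = (a + b + 1) * b + a" by (simp add: algebra_simps)
    finally show ?thesis using b by simp
  qed
  then show ?thesis using assms by simp
qed

lemma inv_neg: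
  assumes "0 < a" "a < (n::nat)" "(c * a) mod n = 1"
  shows "((c * (n - 1)) * (n - a)) mod n = 1"
proof -
  have "((c * (n - 1)) * (n - a)) mod n = (c * (((n - 1) * (n - a)) mod n)) mod n"
    by (simp add: mod_mult_right_eq mult.assoc)
  also have "\<dots> = 1" using neg_mod[OF assms(1,2)] assms(3) by simp
  finally show ?thesis .
qed

lemma modone: "1 < (n::nat) \<Longrightarrow> x = q * n + 1 \<Longrightarrow> x mod n = 1"
proof -
  assume n: "1 < n" and x: "x = q * n + 1"
  have "(1 + q * n) mod n = 1 mod n" by (rule mod_mult_self1)
  then show ?thesis using n x by (simp add: add.commute)
qed

lemma unit_exists:
  assumes "11 \<le> (n::nat)"
  shows "\<exists>a c. 2 \<le> a \<and> a + 2 \<le> n \<and> 2 * a \<noteq> n \<and> (c * a) mod n = 1"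
proof -
  have n1: "1 < n" using assms by simp
  consider (odd) i where "n = 2 * i + 1" | (m4) j where "n = 4 * j" | (m6) i where "n = 8 * i + 6"
    | (m2) i where "n = 8 * i + 10"
  proof -
    define q where "q = n div 8"
    define r where "r = n mod 8"
    have qr: "n = 8 * q + r" unfolding q_def r_def by (metis div_mult_mod_eq mult.commute)
    have "r < 8" unfolding r_def by simp
    then have "r = 0 \<or> r = 1 \<or> r = 2 \<or> r = 3 \<or> r = 4 \<or> r = 5 \<or> r = 6 \<or> r = 7" by auto
    then show ?thesis
    proof (elim disjE)
      assume "r = 0" then show ?thesis using that(2)[of "2 * q"] qr by simp
    next
      assume "r = 1" then show ?thesis using that(1)[of "4 * q"] qr by simp
    next
      assume "r = 2" then show ?thesis using that(4)[of "q - 1"] qr assms by simp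
    next
      assume "r = 3" then show ?thesis using that(1)[of "4 * q + 1"] qr by simp
    next
      assume "r = 4" then show ?thesis using that(2)[of "2 * q + 1"] qr by simp
    next
      assume "r = 5" then show ?thesis using that(1)[of "4 * q + 2"] qr by simp
    next
      assume "r = 6" then show ?thesis using that(3)[of q] qr by simp
    next
      assume "r = 7" then show ?thesis using that(1)[of "4 * q + 3"] qr by simp
    qed
  qed
  then show ?thesis
  proof cases
    case odd
    have "((i + 1) * 2) mod n = 1" using odd n1 by (intro modone[of n _ 1]) auto
    then show ?thesis using odd assms by (intro exI[of _ 2] exI[of _ "i + 1"]) auto
  next
    case m4
    have "((2 * j + 1) * (2 * j + 1)) mod n = 1" using m4 n1
      by (intro modone[of n _ "j + 1"]) (auto simp: algebra_simps)
    then show ?thesis using m4 assms by (intro exI[of _ "2 * j + 1"] exI[of _ "2 * j + 1"]) auto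
  next
    case m6
    have "((2 * i + 1) * (4 * i + 1)) mod n = 1" using m6 n1
      by (intro modone[of n _ i]) (auto simp: algebra_simps)
    then show ?thesis using m6 assms by (intro exI[of _ "4 * i + 1"] exI[of _ "2 * i + 1"]) auto
  next
    case m2
    have "((6 * i + 7) * (4 * i + 3)) mod n = 1" using m2 n1
      by (intro modone[of n _ "3 * i + 2"]) (auto simp: algebra_simps)
    then show ?thesis using m2 assms by (intro exI[of _ "4 * i + 3"] exI[of _ "6 * i + 7"]) auto
  qed
qed

lemma darts_univ:
  assumes fin: "finite V" and W: "W \<subseteq> V" and uw: "\<And>w y. w \<in> W \<Longrightarrow> y \<in> V \<Longrightarrow> y \<noteq> w \<Longrightarrow> E w y"
    and sym: "\<And>u v. E u v \<Longrightarrow> E v u"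
  shows "card W * (card V - 1) + (card V - card W) * card W \<le> card (darts V E)"
proof -
  define O1 where "O1 = Sigma W (\<lambda>w. V - {w})"
  define I1 where "I1 = (V - W) \<times> W"
  have finW: "finite W" using fin W finite_subset by blast
  have c1: "card O1 = card W * (card V - 1)"
  proof -
    have "card O1 = (\<Sum>w\<in>W. card (V - {w}))" unfolding O1_def using finW fin by (simp add: card_SigmaI)
    also have "\<dots> = (\<Sum>w\<in>W. card V - 1)" using W fin by (intro sum.cong) (auto simp: card_Diff_singleton)
    finally show ?thesis by simp
  qed
  have c2: "card I1 = (card V - card W) * card W"
    unfolding I1_def using fin finW W by (simp add: card_cartesian_product card_Diff_subset)
  have disj: "O1 \<inter> I1 = {}" unfolding O1_def I1_def by auto
  have sub: "O1 \<union> I1 \<subseteq> darts V E"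
  proof
    fix x assume "x \<in> O1 \<union> I1"
    then show "x \<in> darts V E"
    proof
      assume "x \<in> O1"
      then obtain w y where "x = (w, y)" "w \<in> W" "y \<in> V" "y \<noteq> w" unfolding O1_def by auto
      then show ?thesis using W uw by (auto simp: darts_def)
    next
      assume "x \<in> I1"
      then obtain w y where "x = (y, w)" "w \<in> W" "y \<in> V" "y \<notin> W" unfolding I1_def by auto
      moreover then have "E w y" using uw by metis
      ultimately show ?thesis using W sym by (auto simp: darts_def)
    qed
  qed
  have finD: "finite (darts V E)"
  proof -
    have "darts V E \<subseteq> V \<times> V" by (auto simp: darts_def)
    then show ?thesis using fin finite_subset by blast
  qed
  have "card (O1 \<union> I1) = card O1 + card I1"
    using disj finD sub by (intro card_Un_disjoint) (auto intro: finite_subset)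
  moreover have "card (O1 \<union> I1) \<le> card (darts V E)" using sub finD by (rule card_mono[rotated])
  ultimately show ?thesis using c1 c2 by simp
qed

lemma darts_big:
  assumes "11 \<le> n"
  shows "10 * n - 30 \<le> card (darts {0..<n} (cyc_power_adj n))"
proof -
  obtain a c where ac: "2 \<le> a" "a + 2 \<le> n" "2 * a \<noteq> n" "(c * a) mod n = 1" using unit_exists[OF assms] by blast
  define W where "W = {0, 1, n - 1, a, n - a}"
  have n1: "(1 * 1) mod n = 1" using assms by simp
  have u0: "cyc_power_adj n 0 y" if "y \<noteq> 0" for y using adj0 that by simp
  have u1: "cyc_power_adj n 1 y" if "y < n" "y \<noteq> 1" for y using univ_inv[OF n1] that by blast
  have u2: "cyc_power_adj n (n - 1) y" if "y < n" "y \<noteq> n - 1" for y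
    using univ_inv[OF inv_neg[of 1 n 1]] n1 assms that by simp
  have u3: "cyc_power_adj n a y" if "y < n" "y \<noteq> a" for y using univ_inv[OF ac(4)] that by blast
  have u4: "cyc_power_adj n (n - a) y" if "y < n" "y \<noteq> n - a" for y
    using univ_inv[OF inv_neg[of a n c]] ac that by simp
  have uw: "cyc_power_adj n w y" if "w \<in> W" "y \<in> {0..<n}" "y \<noteq> w" for w y
    using that u0 u1 u2 u3 u4 unfolding W_def by auto
  have WV: "W \<subseteq> {0..<n}" using ac unfolding W_def by auto
  have ne: "(0::nat) \<noteq> 1" "0 \<noteq> n - 1" "0 \<noteq> a" "0 \<noteq> n - a" "1 \<noteq> n - 1" "1 \<noteq> a" "1 \<noteq> n - a"
    "n - 1 \<noteq> a" "n - 1 \<noteq> n - a" "a \<noteq> n - a" using ac assms by auto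
  have cW: "card W = 5" unfolding W_def using ne by simp
  have "card W * (card {0..<n} - 1) + (card {0..<n} - card W) * card W \<le> card (darts {0..<n} (cyc_power_adj n))"
    by (rule darts_univ[OF _ WV uw]) (auto simp: cyc_power_adj_def)
  then show ?thesis using cW assms by simp
qed

lemma pg_ne: "2 \<le> n \<Longrightarrow> v < n \<Longrightarrow> nbrs {0..<n} (cyc_power_adj n) v \<noteq> {}"
proof -
  assume n: "2 \<le> n" and v: "v < n"
  show ?thesis
  proof (cases "v = 0")
    case True
    then have "1 \<in> nbrs {0..<n} (cyc_power_adj n) v" using n adj0[of 1 n] by (auto simp: nbrs_def)
    then show ?thesis by blast
  next
    case False
    then have "cyc_power_adj n v 0" using adj0[of v n] by (auto simp: cyc_power_adj_def)
    then have "0 \<in> nbrs {0..<n} (cyc_power_adj n) v" using n by (auto simp: nbrs_def)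
    then show ?thesis by blast
  qed
qed

lemma pg_Dne: "2 \<le> n \<Longrightarrow> darts {0..<n} (cyc_power_adj n) \<noteq> {}"
proof -
  assume "2 \<le> n"
  then have "(0, 1) \<in> darts {0..<n} (cyc_power_adj n)" using adj0[of 1 n] by (auto simp: darts_def)
  then show ?thesis by blast
qed

lemma pg_nd:
  assumes n: "3 \<le> n" and d: "(u, v) \<in> darts {0..<n} (cyc_power_adj n)"
    and Nu: "nbrs {0..<n} (cyc_power_adj n) u = {v}" and Nv: "nbrs {0..<n} (cyc_power_adj n) v = {u}"
  shows False
proof -
  have inN0: "y \<in> nbrs {0..<n} (cyc_power_adj n) 0" if "0 < y" "y < n" for y
    using adj0[OF that(1)] that by (auto simp: nbrs_def)
  have zN: "0 \<in> nbrs {0..<n} (cyc_power_adj n) x" if "0 < x" "x < n" for x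
    using adj0[OF that(1), of n] that by (auto simp: nbrs_def cyc_power_adj_def)
  have uv: "u < n" "v < n" "u \<noteq> v" using d by (auto simp: darts_def cyc_power_adj_def)
  show False
  proof (cases "u = 0")
    case True
    then have "1 \<in> {v}" "2 \<in> {v}" using inN0[of 1] inN0[of 2] n Nu by auto
    then show False by simp
  next
    case False
    then have "0 \<in> {v}" using zN[of u] uv Nu by auto
    then have "v = 0" by simp
    then have "1 \<in> {u}" "2 \<in> {u}" using inN0[of 1] inN0[of 2] n Nv by auto
    then show False by simp
  qed
qed


definition L5 :: "nat list list" where
  "L5 = [[1, 3, 4, 2], [2, 4, 3, 0], [1, 0, 4, 3], [4, 2, 1, 0], [2, 0, 1, 3]]"

definition F5 :: "(nat \<times> nat) list list" where
  "F5 = [[(0, 1), (1, 2), (2, 0)], [(0, 2), (2, 4), (4, 0)], [(0, 3), (3, 4), (4, 2), (2, 3), (3, 1), (1, 0)], [(0, 4), (4, 1), (1, 3), (3, 0)], [(1, 4), (4, 3), (3, 2), (2, 1)]]"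

definition L6 :: "nat list list" where
  "L6 = [[1, 4, 2, 3, 5], [2, 3, 4, 0, 5], [0, 5, 1, 4], [0, 1, 5], [1, 2, 5, 0], [4, 1, 0, 3, 2]]"

definition F6 :: "(nat \<times> nat) list list" where
  "F6 = [[(0, 1), (1, 5), (5, 0)], [(0, 2), (2, 5), (5, 4), (4, 0)], [(0, 3), (3, 1), (1, 4), (4, 2), (2, 0)], [(0, 4), (4, 1), (1, 0)], [(0, 5), (5, 3), (3, 0)], [(1, 2), (2, 4), (4, 5), (5, 1)], [(1, 3), (3, 5), (5, 2), (2, 1)]]"

definition L7 :: "nat list list" where
  "L7 = [[1, 3, 2, 6, 4, 5], [2, 4, 3, 0, 5, 6], [3, 5, 4, 1, 6, 0], [4, 6, 5, 2, 0, 1], [5, 0, 6, 3, 1, 2], [6, 1, 0, 4, 2, 3], [0, 2, 1, 5, 3, 4]]"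

definition F7 :: "(nat \<times> nat) list list" where
  "F7 = [[(0, 1), (1, 5), (5, 0)], [(0, 2), (2, 3), (3, 0)], [(0, 3), (3, 1), (1, 0)], [(0, 4), (4, 6), (6, 0)], [(0, 5), (5, 4), (4, 0)], [(0, 6), (6, 2), (2, 0)], [(1, 2), (2, 6), (6, 1)], [(1, 3), (3, 4), (4, 1)], [(1, 4), (4, 2), (2, 1)], [(1, 6), (6, 5), (5, 1)], [(2, 4), (4, 5), (5, 2)], [(2, 5), (5, 3), (3, 2)], [(3, 5), (5, 6), (6, 3)], [(3, 6), (6, 4), (4, 3)]]"

definition L8 :: "nat list list" where
  "L8 = [[4, 2, 6, 7, 3, 5, 1], [7, 4, 0, 5, 6, 2, 3], [0, 4, 5, 7, 3, 1, 6], [7, 1, 2, 6, 4, 5, 0], [0, 1, 7, 5, 3, 6, 2], [4, 7, 2, 6, 1, 0, 3], [3, 7, 0, 2, 1, 5, 4], [6, 2, 5, 4, 1, 3, 0]]"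

definition F8 :: "(nat \<times> nat) list list" where
  "F8 = [[(0, 1), (1, 5), (5, 0)], [(0, 2), (2, 4), (4, 0)], [(0, 3), (3, 7), (7, 0)], [(0, 4), (4, 1), (1, 0)], [(0, 5), (5, 3), (3, 0)], [(0, 6), (6, 2), (2, 0)], [(0, 7), (7, 6), (6, 0)], [(1, 2), (2, 6), (6, 1)], [(1, 3), (3, 2), (2, 1)], [(1, 4), (4, 7), (7, 1)], [(1, 6), (6, 5), (5, 1)], [(1, 7), (7, 3), (3, 1)], [(2, 3), (3, 6), (6, 7), (7, 2)], [(2, 5), (5, 6), (6, 4), (4, 2)], [(2, 7), (7, 5), (5, 2)], [(3, 4), (4, 6), (6, 3)], [(3, 5), (5, 4), (4, 3)], [(4, 5), (5, 7), (7, 4)]]"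

definition rhoL :: "nat list list \<Rightarrow> nat \<Rightarrow> nat \<Rightarrow> nat" where
  "rhoL Ls = (\<lambda>v. cycle_of_list (Ls ! v))"

lemma rs_concrete:
  assumes "0 < n" "\<forall>v\<in>set [0..<n]. distinct (Ls ! v) \<and> set (Ls ! v) = Set.filter (adjc n v) (set [0..<n])"
  shows "rotation_system {0..<n} (cyc_power_adj n) (rhoL Ls)"
  unfolding rhoL_def
  by (rule rotation_system_lists) (use assms in \<open>auto simp: nbrs_code\<close>)

lemma faces_concrete:
  assumes "2 \<le> n" "rotation_system {0..<n} (cyc_power_adj n) rho" "distinct (concat cs)"
    "\<forall>c\<in>set cs. c \<noteq> [] \<and> set c \<subseteq> Set.filter (\<lambda>(u, v). adjc n u v) (set [0..<n] \<times> set [0..<n])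
        \<and> map (face_perm rho) c = rotate1 c"
  shows "length cs \<le> num_faces {0..<n} (cyc_power_adj n) rho"
proof -
  interpret rmap "{0..<n}" "cyc_power_adj n" rho using pg_rmap[OF assms(2)] .
  show ?thesis using faces_ge_cycles[OF pg_Dne[OF assms(1)] assms(3)] assms(1,4) darts_code[of n] by simp
qed

lemma pg_facts:
  assumes n: "2 \<le> n" and rs: "rotation_system {0..<n} (cyc_power_adj n) rho"
  shows "even (chi {0..<n} (cyc_power_adj n) rho)"
    and "card (darts {0..<n} (cyc_power_adj n)) = 2 * (card (darts {0..<n} (cyc_power_adj n)) div 2)"
    and "2 * num_faces {0..<n} (cyc_power_adj n) rho \<le> card (darts {0..<n} (cyc_power_adj n))"
    and "1 \<le> num_faces {0..<n} (cyc_power_adj n) rho"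
    and "3 \<le> n \<Longrightarrow> 3 * num_faces {0..<n} (cyc_power_adj n) rho \<le> card (darts {0..<n} (cyc_power_adj n))"
proof -
  interpret rmap "{0..<n}" "cyc_power_adj n" rho using pg_rmap[OF rs] .
  have ne: "\<And>v. v \<in> {0..<n} \<Longrightarrow> nbrs {0..<n} (cyc_power_adj n) v \<noteq> {}" using pg_ne n by auto
  show "even (chi {0..<n} (cyc_power_adj n) rho)"
    using parity[OF ne pg_Dne[OF n]] by (simp add: chi_def)
  show "card (darts {0..<n} (cyc_power_adj n)) = 2 * (card (darts {0..<n} (cyc_power_adj n)) div 2)"
    using card_T_orbits by simp
  show "2 * num_faces {0..<n} (cyc_power_adj n) rho \<le> card (darts {0..<n} (cyc_power_adj n))"
    using faces_le2 pg_Dne[OF n] by simp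
  show "1 \<le> num_faces {0..<n} (cyc_power_adj n) rho" using faces_ge1 pg_Dne[OF n] by simp
  assume n3: "3 \<le> n"
  show "3 * num_faces {0..<n} (cyc_power_adj n) rho \<le> card (darts {0..<n} (cyc_power_adj n))"
    using faces_le3[OF pg_nd[OF n3]] pg_Dne[OF n] by simp
qed

lemma genus_small:
  assumes n: "3 \<le> n" and dd: "6 * n \<le> card (darts {0..<n} (cyc_power_adj n)) + 12"
    and rs: "rotation_system {0..<n} (cyc_power_adj n) rho"
    and ff: "card (darts {0..<n} (cyc_power_adj n)) div 2 \<le> n + num_faces {0..<n} (cyc_power_adj n) rho + 1"
  shows "graph_genus {0..<n} (cyc_power_adj n) \<le> 1"
proof -
  let ?D = "card (darts {0..<n} (cyc_power_adj n))" and ?F = "num_faces {0..<n} (cyc_power_adj n) rho"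
  have ev: "even (chi {0..<n} (cyc_power_adj n) rho)" using pg_facts(1)[OF _ rs] n by simp
  have d2: "?D = 2 * (?D div 2)" using pg_facts(2)[OF _ rs] n by simp
  have f3: "3 * ?F \<le> ?D" using pg_facts(5)[OF _ rs n] n by simp
  have c: "chi {0..<n} (cyc_power_adj n) rho = int n - int (?D div 2) + int ?F" by (simp add: chi_def)
  have le2: "chi {0..<n} (cyc_power_adj n) rho \<le> 2" using c d2 f3 dd by linarith
  have "chi {0..<n} (cyc_power_adj n) rho \<ge> -1" using c ff by linarith
  then have "chi {0..<n} (cyc_power_adj n) rho \<ge> 2 - 2 * int 1" using ev by presburger
  then show ?thesis using genus_le[OF rs ev le2] by blast
qed

lemma genus_big:
  assumes n: "3 \<le> n" and dd: "6 * n + 13 \<le> card (darts {0..<n} (cyc_power_adj n))"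
  shows "3 \<le> graph_genus {0..<n} (cyc_power_adj n)"
proof -
  let ?D = "card (darts {0..<n} (cyc_power_adj n))"
  obtain rho0 where rs0: "rotation_system {0..<n} (cyc_power_adj n) rho0"
    using rotation_exists[of "{0..<n}"] by auto
  have b: "chi {0..<n} (cyc_power_adj n) rho \<le> -3" if rs: "rotation_system {0..<n} (cyc_power_adj n) rho" for rho
  proof -
    let ?F = "num_faces {0..<n} (cyc_power_adj n) rho"
    have d2: "?D = 2 * (?D div 2)" using pg_facts(2)[OF _ rs] n by simp
    have f3: "3 * ?F \<le> ?D" using pg_facts(5)[OF _ rs n] n by simp
    have c: "chi {0..<n} (cyc_power_adj n) rho = int n - int (?D div 2) + int ?F" by (simp add: chi_def)
    show ?thesis using c d2 f3 dd by linarith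
  qed
  show ?thesis
  proof (rule genus_ge[OF rs0])
    show "even (chi {0..<n} (cyc_power_adj n) rho0)" using pg_facts(1)[OF _ rs0] n by simp
    show "chi {0..<n} (cyc_power_adj n) rho0 \<le> 2" using b[OF rs0] by simp
    fix rho assume rs: "rotation_system {0..<n} (cyc_power_adj n) rho"
    have "even (chi {0..<n} (cyc_power_adj n) rho)" using pg_facts(1)[OF _ rs] n by simp
    then show "chi {0..<n} (cyc_power_adj n) rho \<le> 2 - 2 * int 3" using b[OF rs] by presburger
  qed
qed

lemma dcard: "0 < n \<Longrightarrow> card (darts {0..<n} (cyc_power_adj n)) = card (Set.filter (\<lambda>(u, v). adjc n u v) (set [0..<n] \<times> set [0..<n]))"
  using darts_code by simp

lemma d2: "card (darts {0..<2} (cyc_power_adj 2)) = 2" by (subst dcard) (simp, code_simp)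
lemma d3: "card (darts {0..<3} (cyc_power_adj 3)) = 6" by (subst dcard) (simp, code_simp)
lemma d4: "card (darts {0..<4} (cyc_power_adj 4)) = 12" by (subst dcard) (simp, code_simp)
lemma d5: "card (darts {0..<5} (cyc_power_adj 5)) = 20" by (subst dcard) (simp, code_simp)
lemma d6: "card (darts {0..<6} (cyc_power_adj 6)) = 26" by (subst dcard) (simp, code_simp)
lemma d7: "card (darts {0..<7} (cyc_power_adj 7)) = 42" by (subst dcard) (simp, code_simp)
lemma d8: "card (darts {0..<8} (cyc_power_adj 8)) = 56" by (subst dcard) (simp, code_simp)
lemma d9: "card (darts {0..<9} (cyc_power_adj 9)) = 72" by (subst dcard) (simp, code_simp)
lemma d10: "card (darts {0..<10} (cyc_power_adj 10)) = 82" by (subst dcard) (simp, code_simp)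

lemma rs5: "rotation_system {0..<5} (cyc_power_adj 5) (rhoL L5)" by (rule rs_concrete) (simp, code_simp)
lemma rs6: "rotation_system {0..<6} (cyc_power_adj 6) (rhoL L6)" by (rule rs_concrete) (simp, code_simp)
lemma rs7: "rotation_system {0..<7} (cyc_power_adj 7) (rhoL L7)" by (rule rs_concrete) (simp, code_simp)
lemma rs8: "rotation_system {0..<8} (cyc_power_adj 8) (rhoL L8)" by (rule rs_concrete) (simp, code_simp)

lemma f5: "5 \<le> num_faces {0..<5} (cyc_power_adj 5) (rhoL L5)"
proof -
  have "length F5 \<le> num_faces {0..<5} (cyc_power_adj 5) (rhoL L5)"
    apply (rule faces_concrete[OF _ rs5])
      apply simp
     apply code_simp
    apply code_simp
    done
  then show ?thesis by (simp add: F5_def)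
qed

lemma f6: "7 \<le> num_faces {0..<6} (cyc_power_adj 6) (rhoL L6)"
proof -
  have "length F6 \<le> num_faces {0..<6} (cyc_power_adj 6) (rhoL L6)"
    apply (rule faces_concrete[OF _ rs6])
      apply simp
     apply code_simp
    apply code_simp
    done
  then show ?thesis by (simp add: F6_def)
qed

lemma f7: "14 \<le> num_faces {0..<7} (cyc_power_adj 7) (rhoL L7)"
proof -
  have "length F7 \<le> num_faces {0..<7} (cyc_power_adj 7) (rhoL L7)"
    apply (rule faces_concrete[OF _ rs7])
      apply simp
     apply code_simp
    apply code_simp
    done
  then show ?thesis by (simp add: F7_def)
qed

lemma f8: "18 \<le> num_faces {0..<8} (cyc_power_adj 8) (rhoL L8)"
proof -
  have "length F8 \<le> num_faces {0..<8} (cyc_power_adj 8) (rhoL L8)"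
    apply (rule faces_concrete[OF _ rs8])
      apply simp
     apply code_simp
    apply code_simp
    done
  then show ?thesis by (simp add: F8_def)
qed


lemma g1: "graph_genus {0..<1} (cyc_power_adj 1) \<le> 1"
proof -
  obtain rho where rs: "rotation_system {0..<1::nat} (cyc_power_adj 1) rho"
    using rotation_exists[of "{0..<1::nat}"] by auto
  have "darts {0..<1} (cyc_power_adj 1) = {}" by (auto simp: darts_def cyc_power_adj_def)
  then have c: "chi {0..<1} (cyc_power_adj 1) rho = 2" by (simp add: chi_def num_faces_def)
  show ?thesis by (rule genus_le[OF rs]) (use c in auto)
qed

lemma g2: "graph_genus {0..<2} (cyc_power_adj 2) \<le> 1"
proof -
  obtain rho where rs: "rotation_system {0..<2::nat} (cyc_power_adj 2) rho"
    using rotation_exists[of "{0..<2::nat}"] by auto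
  have "2 * num_faces {0..<2} (cyc_power_adj 2) rho \<le> 2" "1 \<le> num_faces {0..<2} (cyc_power_adj 2) rho"
    using pg_facts(3,4)[OF _ rs] d2 by auto
  then have "num_faces {0..<2} (cyc_power_adj 2) rho = 1" by linarith
  then have c: "chi {0..<2} (cyc_power_adj 2) rho = 2" using d2 by (simp add: chi_def)
  show ?thesis by (rule genus_le[OF rs]) (use c in auto)
qed

lemma g34: "n = 3 \<or> n = 4 \<Longrightarrow> graph_genus {0..<n} (cyc_power_adj n) \<le> 1"
proof -
  assume n: "n = 3 \<or> n = 4"
  obtain rho where rs: "rotation_system {0..<n} (cyc_power_adj n) rho"
    using rotation_exists[of "{0..<n}"] by auto
  have f: "1 \<le> num_faces {0..<n} (cyc_power_adj n) rho" using pg_facts(4)[OF _ rs] n by auto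
  show ?thesis
    by (rule genus_small[OF _ _ rs]) (use n d3 d4 f in auto)
qed

lemma g5: "graph_genus {0..<5} (cyc_power_adj 5) \<le> 1"
  by (rule genus_small[OF _ _ rs5]) (use d5 f5 in auto)

lemma g6: "graph_genus {0..<6} (cyc_power_adj 6) \<le> 1"
  by (rule genus_small[OF _ _ rs6]) (use d6 f6 in auto)

lemma g7: "graph_genus {0..<7} (cyc_power_adj 7) \<le> 1"
  by (rule genus_small[OF _ _ rs7]) (use d7 f7 in auto)

lemma g8: "graph_genus {0..<8} (cyc_power_adj 8) = 2"
proof -
  have up: "chi {0..<8} (cyc_power_adj 8) rho \<le> -2" if rs: "rotation_system {0..<8} (cyc_power_adj 8) rho" for rho
  proof -
    have "3 * num_faces {0..<8} (cyc_power_adj 8) rho \<le> 56" using pg_facts(5)[OF _ rs] d8 by simp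
    then show ?thesis using d8 by (simp add: chi_def)
  qed
  have ev: "even (chi {0..<8} (cyc_power_adj 8) (rhoL L8))" using pg_facts(1)[OF _ rs8] by simp
  have c: "chi {0..<8} (cyc_power_adj 8) (rhoL L8) = -2"
    using up[OF rs8] f8 d8 by (simp add: chi_def)
  have "graph_genus {0..<8} (cyc_power_adj 8) \<le> 2" by (rule genus_le[OF rs8 ev]) (use c in auto)
  moreover have "2 \<le> graph_genus {0..<8} (cyc_power_adj 8)"
    by (rule genus_ge[OF rs8 ev]) (use c up in auto)
  ultimately show ?thesis by simp
qed

lemma gbig: "9 \<le> n \<Longrightarrow> 3 \<le> graph_genus {0..<n} (cyc_power_adj n)"
proof -
  assume n: "9 \<le> n"
  have "6 * n + 13 \<le> card (darts {0..<n} (cyc_power_adj n))"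
  proof (cases "n \<le> 10")
    case True
    then have "n = 9 \<or> n = 10" using n by auto
    then show ?thesis using d9 d10 by auto
  next
    case False
    then show ?thesis using darts_big[of n] by simp
  qed
  then show ?thesis using genus_big n by simp
qed

lemma gsmall: "0 < n \<Longrightarrow> n \<le> 7 \<Longrightarrow> graph_genus {0..<n} (cyc_power_adj n) \<le> 1"
proof -
  assume "0 < n" "n \<le> 7"
  then have "n = 1 \<or> n = 2 \<or> n = 3 \<or> n = 4 \<or> n = 5 \<or> n = 6 \<or> n = 7" by auto
  then show ?thesis using g1 g2 g34 g5 g6 g7 by auto
qed

theorem lemma4p1:
  fixes n :: nat
  assumes "n > 0"
  shows "(graph_genus {0..<n} (cyc_power_adj n) = 2 \<longleftrightarrow> n = 8) \<and>
         (n \<ge> 9 \<longrightarrow> graph_genus {0..<n} (cyc_power_adj n) \<ge> 3)"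
proof (cases "n \<le> 7")
  case True
  then show ?thesis using gsmall[OF assms] by fastforce
next
  case False
  show ?thesis
  proof (cases "n = 8")
    case True
    then show ?thesis using g8 by simp
  next
    case False
    then have "9 \<le> n" using \<open>\<not> n \<le> 7\<close> by simp
    then show ?thesis using gbig by fastforce
  qed
qed

end
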